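(* Let $\mathsf a\in\mathbb R^k$ and $\mathsf b\in\mathbb R^l$ be independent random vectors whose joint distribution satisfies $\mu_{\mathsf a}\times\mu_{\mathsf b}\ll\lambda^{k+l}$. Then the random vector $\mathsf a\otimes\mathsf b\in\mathbb R^{kl}$ is $(k+l-1)$-analytic.
   Context: $\otimes$ denotes the Kronecker product. For differentiable $h\colon\mathbb R^p\to\mathbb R^q$ with differential $Dh(\mathbf v)\in\mathbb R^{q\times p}$, $Jh(\mathbf v)=\sqrt{\det(Dh(\mathbf v)^TDh(\mathbf v))}$ if $q\ge p$ and $\sqrt{\det(Dh(\mathbf v)Dh(\mathbf v)^T)}$ otherwise. A Borel measure $\mu$ on $\mathbb R^m$ is $s$-analytic ($s\in\{1,\dots,m\}$) if for every Borel $\mathcal U\subseteq\mathbb R^m$ with $\mu(\mathcal U)>0$ there exist a Borel set $\mathcal A\subseteq\mathbb R^s$ with $\lambda^s(\mathcal A)>0$ and a real analytic $h\colon\mathbb R^s\to\mathbb R^m$ with $Jh$ not identically zero such that $h(\mathcal A)\subseteq\mathcal U$. A random vector is $s$-analytic if its distribution is $s$-analytic. *)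

theory Defs
  imports "HOL-Probability.Probability" "HOL-Combinatorics.Permutations"
begin

abbreviation RR :: "nat \<Rightarrow> (nat \<Rightarrow> real) set" where
  "RR n \<equiv> PiE {..<n} (\<lambda>_. UNIV)"

abbreviation borel_n :: "nat \<Rightarrow> (nat \<Rightarrow> real) measure" where
  "borel_n n \<equiv> PiM {..<n} (\<lambda>_. borel)"

abbreviation lebesgue_n :: "nat \<Rightarrow> (nat \<Rightarrow> real) measure" where
  "lebesgue_n n \<equiv> PiM {..<n} (\<lambda>_. lborel)"

definition kron :: "nat \<Rightarrow> nat \<Rightarrow> (nat \<Rightarrow> real) \<Rightarrow> (nat \<Rightarrow> real) \<Rightarrow> (nat \<Rightarrow> real)" where
  "kron k l a b = (\<lambda>n. if n < k * l then a (n div l) * b (n mod l) else undefined)"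

definition real_analytic :: "nat \<Rightarrow> nat \<Rightarrow> ((nat \<Rightarrow> real) \<Rightarrow> (nat \<Rightarrow> real)) \<Rightarrow> bool" where
  "real_analytic s m h \<longleftrightarrow>
     (\<forall>x0 \<in> RR s. \<exists>r>0. \<forall>j<m. \<exists>c :: (nat \<Rightarrow> nat) \<Rightarrow> real.
        \<forall>x \<in> RR s. (\<forall>i<s. \<bar>x i - x0 i\<bar> < r) \<longrightarrow>
          ((\<lambda>\<alpha>. c \<alpha> * (\<Prod>i<s. (x i - x0 i) ^ \<alpha> i)) has_sum h x j) {\<alpha>. \<forall>i. i \<ge> s \<longrightarrow> \<alpha> i = 0})"

definition Dmat :: "nat \<Rightarrow> ((nat \<Rightarrow> real) \<Rightarrow> (nat \<Rightarrow> real)) \<Rightarrow> (nat \<Rightarrow> real) \<Rightarrow> nat \<Rightarrow> nat \<Rightarrow> real" where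
  "Dmat s h v j i = deriv (\<lambda>t. h (v(i := t)) j) (v i)"

definition detn :: "nat \<Rightarrow> (nat \<Rightarrow> nat \<Rightarrow> real) \<Rightarrow> real" where
  "detn n A = (\<Sum>p | p permutes {..<n}. of_int (sign p) * (\<Prod>i<n. A i (p i)))"

definition Jac :: "nat \<Rightarrow> nat \<Rightarrow> ((nat \<Rightarrow> real) \<Rightarrow> (nat \<Rightarrow> real)) \<Rightarrow> (nat \<Rightarrow> real) \<Rightarrow> real" where
  "Jac s m h v =
     (let D = Dmat s h v in
      if m \<ge> s then sqrt (detn s (\<lambda>i i'. \<Sum>j<m. D j i * D j i'))
      else sqrt (detn m (\<lambda>j j'. \<Sum>i<s. D j i * D j' i)))"

definition s_analytic :: "nat \<Rightarrow> nat \<Rightarrow> (nat \<Rightarrow> real) measure \<Rightarrow> bool" where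
  "s_analytic s m \<mu> \<longleftrightarrow> s \<in> {1..m} \<and>
     (\<forall>U \<in> sets (borel_n m). emeasure \<mu> U > 0 \<longrightarrow>
        (\<exists>A \<in> sets (borel_n s). emeasure (lebesgue_n s) A > 0 \<and>
           (\<exists>h. real_analytic s m h \<and> (\<exists>v \<in> RR s. Jac s m h v \<noteq> 0) \<and> h ` A \<subseteq> U)))"

end

theory Submission
  imports Defs
begin


lemma sf_PiM: "finite I \<Longrightarrow> sigma_finite_measure (PiM I (\<lambda>_. lborel :: real measure))"
proof -
  interpret product_sigma_finite "\<lambda>_. lborel :: real measure" by standard
  show "finite I \<Longrightarrow> ?thesis" by (rule sigma_finite)
qed

lemma kron_cong:
  assumes "\<And>i. i < k \<Longrightarrow> x i = x' i" "\<And>j. j < l \<Longrightarrow> y j = y' j"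
  shows "kron k l x y = kron k l x' y'"
proof -
  have "n < k * l \<Longrightarrow> n div l < k" for n
    by (simp add: less_mult_imp_div_less mult.commute)
  moreover have "n < k * l \<Longrightarrow> n mod l < l" for n
    by (metis mod_less_divisor mult_zero_right not_gr_zero not_less_zero)
  ultimately show ?thesis using assms unfolding kron_def by auto
qed

lemma kron_meas:
  "(\<lambda>p. kron k l (fst p) (snd p)) \<in> measurable (borel_n k \<Otimes>\<^sub>M borel_n l) (borel_n (k*l))"
proof -
  have eq: "(\<lambda>p. kron k l (fst p) (snd p)) = (\<lambda>p i. if i<k*l then fst p (i div l) * snd p (i mod l) else undefined)"
    by (auto simp: kron_def)
  have dl: "n < k * l \<Longrightarrow> n div l < k" for n
    by (simp add: less_mult_imp_div_less mult.commute)
  have ml: "n < k * l \<Longrightarrow> n mod l < l" for n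
    by (metis mod_less_divisor mult_zero_right not_gr_zero not_less_zero)
  show ?thesis unfolding eq
  proof (rule measurable_PiM_single')
    fix i assume i: "i \<in> {..<k*l}"
    have a: "(\<lambda>p. fst p (i div l)) \<in> borel_measurable (borel_n k \<Otimes>\<^sub>M borel_n l)"
      using dl[of i] i by (intro measurable_compose[OF measurable_fst measurable_component_singleton]) auto
    have b: "(\<lambda>p. snd p (i mod l)) \<in> borel_measurable (borel_n k \<Otimes>\<^sub>M borel_n l)"
      using ml[of i] i by (intro measurable_compose[OF measurable_snd measurable_component_singleton]) auto
    show "(\<lambda>p. if i<k*l then fst p (i div l) * snd p (i mod l) else undefined) \<in> borel_measurable (borel_n k \<Otimes>\<^sub>M borel_n l)"
      using i a b by simp
  qed (auto simp: PiE_def extensional_def)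
qed




definition hmap :: "nat \<Rightarrow> nat \<Rightarrow> real \<Rightarrow> (nat \<Rightarrow> real) \<Rightarrow> (nat \<Rightarrow> real)" where
  "hmap k l c v = kron k l (\<lambda>i. if i < k - 1 then v i else c) (\<lambda>j. v (k - 1 + j))"

lemma shift_distr:
  "distr (PiM {k'..<k'+l} (\<lambda>_. lborel)) (lebesgue_n l) (\<lambda>z. \<lambda>j\<in>{..<l}. z (k'+j)) = lebesgue_n l"
proof -
  interpret product_sigma_finite "\<lambda>_. lborel :: real measure" by standard
  show ?thesis
  proof (rule PiM_eqI)
    fix A assume A: "\<And>i. i \<in> {..<l} \<Longrightarrow> A i \<in> sets (lborel::real measure)"
    have meas: "(\<lambda>z. \<lambda>j\<in>{..<l}. z (k'+j)) \<in> measurable (PiM {k'..<k'+l} (\<lambda>_. lborel)) (lebesgue_n l)"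
      by (rule measurable_PiM_single') (auto simp: PiE_def extensional_def)
    have pre: "(\<lambda>z. \<lambda>j\<in>{..<l}. z (k'+j)) -` PiE {..<l} A \<inter> space (PiM {k'..<k'+l} (\<lambda>_. lborel))
        = PiE {k'..<k'+l} (\<lambda>i. A (i - k'))"
    proof (auto simp: space_PiM PiE_iff)
      fix x i assume "\<forall>i\<in>{..<l}. x (k' + i) \<in> A i" "k' \<le> i" "i < k' + l"
      then show "x i \<in> A (i - k')" by (metis add_diff_inverse_nat lessThan_iff add_less_cancel_left not_le)
    next
      fix x i assume "\<forall>i\<in>{k'..<k' + l}. x i \<in> A (i - k')" "i < l"
      then have "x (k'+i) \<in> A (k'+i - k')" by (intro bspec[of _ _ "k'+i"]) auto
      then show "x (k'+i) \<in> A i" by simp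
    qed
    have "emeasure (distr (PiM {k'..<k'+l} (\<lambda>_. lborel)) (lebesgue_n l) (\<lambda>z. \<lambda>j\<in>{..<l}. z (k'+j))) (PiE {..<l} A)
       = emeasure (PiM {k'..<k'+l} (\<lambda>_. lborel)) (PiE {k'..<k'+l} (\<lambda>i. A (i - k')))"
      using A by (subst emeasure_distr[OF meas]) (auto intro!: sets_PiM_I_finite simp: pre)
    also have "\<dots> = (\<Prod>i\<in>{k'..<k'+l}. emeasure lborel (A (i - k')))"
      using A by (subst emeasure_PiM) auto
    also have "\<dots> = (\<Prod>i\<in>{..<l}. emeasure lborel (A i))"
    proof -
      have "(\<Prod>i\<in>{k'..<k'+l}. emeasure lborel (A (i - k'))) = (\<Prod>i\<in>(\<lambda>j. j + k') ` {..<l}. emeasure lborel (A (i - k')))"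
      proof -
        have "(\<lambda>j. j + k') ` {..<l} = {k'..<k'+l}"
          by (simp add: add.commute lessThan_atLeast0)
        then show ?thesis by simp
      qed
      also have "\<dots> = (\<Prod>i\<in>{..<l}. emeasure lborel (A i))"
        by (subst prod.reindex) (auto simp: inj_on_def)
      finally show ?thesis .
    qed
    finally show "emeasure (distr (PiM {k'..<k'+l} (\<lambda>_. lborel)) (lebesgue_n l) (\<lambda>z. \<lambda>j\<in>{..<l}. z (k'+j))) (PiE {..<l} A) = (\<Prod>i\<in>{..<l}. emeasure lborel (A i))" .
  qed simp_all
qed




lemma sets_leb: "sets (lebesgue_n n) = sets (borel_n n)"
  by (intro sets_PiM_cong) auto

lemma hmap_meas:
  assumes "k \<ge> 1"
  shows "hmap k l c \<in> measurable (lebesgue_n (k-1+l)) (borel_n (k*l))"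
proof -
  have dl: "n < k * l \<Longrightarrow> n div l < k" for n
    by (simp add: less_mult_imp_div_less mult.commute)
  have ml: "n < k * l \<Longrightarrow> n mod l < l" for n
    by (metis mod_less_divisor mult_zero_right not_gr_zero not_less_zero)
  have eq: "hmap k l c = (\<lambda>v i. if i<k*l then (if i div l < k - 1 then v (i div l) else c) * v (k - 1 + i mod l) else undefined)"
    by (intro ext) (simp add: hmap_def kron_def)
  show ?thesis unfolding eq
  proof (rule measurable_PiM_single')
    fix i assume i: "i \<in> {..<k*l}"
    have b: "(\<lambda>v. v (k - 1 + i mod l)) \<in> borel_measurable (lebesgue_n (k-1+l))"
      using measurable_component_singleton[of "k - 1 + i mod l" "{..<k-1+l}" "\<lambda>_. lborel::real measure"] ml[of i] i by auto
    have a: "(\<lambda>v. (if i div l < k - 1 then v (i div l) else c)) \<in> borel_measurable (lebesgue_n (k-1+l))"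
    proof (cases "i div l < k - 1")
      case True
      then show ?thesis using measurable_component_singleton[of "i div l" "{..<k-1+l}" "\<lambda>_. lborel::real measure"] by auto
    qed simp
    show "(\<lambda>v. if i<k*l then (if i div l < k - 1 then v (i div l) else c) * v (k - 1 + i mod l) else undefined) \<in> borel_measurable (lebesgue_n (k-1+l))"
      using i a b by simp
  qed (auto simp: PiE_def extensional_def)
qed

lemma slice:
  assumes k: "k \<ge> 1" and U: "U \<in> sets (borel_n (k*l))"
    and pos: "emeasure (lebesgue_n k \<Otimes>\<^sub>M lebesgue_n l)
       {p \<in> space (lebesgue_n k \<Otimes>\<^sub>M lebesgue_n l). kron k l (fst p) (snd p) \<in> U} > 0"
  shows "\<exists>c. c \<noteq> 0 \<and> emeasure (lebesgue_n (k-1+l)) {v \<in> space (lebesgue_n (k-1+l)). hmap k l c v \<in> U} > 0"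
proof -
  define k' where "k' = k - 1"
  have kk: "{..<k} = insert k' {..<k'}" using k by (auto simp: k'_def)
  interpret product_sigma_finite "\<lambda>_. lborel :: real measure" by standard
  have sfn: "sigma_finite_measure (lebesgue_n n)" for n by (rule sigma_finite) simp
  interpret P: pair_sigma_finite "lebesgue_n k" "lebesgue_n l" by (intro pair_sigma_finite.intro sfn)
  define F where "F x y = (indicator U (kron k l x y) :: ennreal)" for x y
  have mK: "(\<lambda>p. kron k l (fst p) (snd p)) \<in> measurable (lebesgue_n k \<Otimes>\<^sub>M lebesgue_n l) (borel_n (k*l))"
    using kron_meas using measurable_cong_sets[OF sets_pair_measure_cong[OF sets_leb sets_leb] refl] by blast
  have mF[measurable]: "(\<lambda>p. F (fst p) (snd p)) \<in> borel_measurable (lebesgue_n k \<Otimes>\<^sub>M lebesgue_n l)"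
    unfolding F_def using mK U by measurable
  have mFc: "(\<lambda>p. F (f p) (g p)) \<in> borel_measurable N"
    if "f \<in> measurable N (lebesgue_n k)" "g \<in> measurable N (lebesgue_n l)" for f g and N :: "'b measure"
    using measurable_compose[OF measurable_Pair[OF that] mF] by simp
  define W where "W = {p \<in> space (lebesgue_n k \<Otimes>\<^sub>M lebesgue_n l). kron k l (fst p) (snd p) \<in> U}"
  have Wm: "W \<in> sets (lebesgue_n k \<Otimes>\<^sub>M lebesgue_n l)"
    unfolding W_def using mK U by measurable
  have "emeasure (lebesgue_n k \<Otimes>\<^sub>M lebesgue_n l) W = (\<integral>\<^sup>+p. F (fst p) (snd p) \<partial>(lebesgue_n k \<Otimes>\<^sub>M lebesgue_n l))"
  proof -
    have "emeasure (lebesgue_n k \<Otimes>\<^sub>M lebesgue_n l) W = (\<integral>\<^sup>+p. indicator W p \<partial>(lebesgue_n k \<Otimes>\<^sub>M lebesgue_n l))"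
      using Wm by simp
    also have "\<dots> = (\<integral>\<^sup>+p. F (fst p) (snd p) \<partial>(lebesgue_n k \<Otimes>\<^sub>M lebesgue_n l))"
      by (rule nn_integral_cong) (auto simp: W_def F_def indicator_def)
    finally show ?thesis .
  qed
  also have "\<dots> = (\<integral>\<^sup>+y. \<integral>\<^sup>+x. F x y \<partial>lebesgue_n k \<partial>lebesgue_n l)"
    using P.nn_integral_snd[OF mF] by simp
  also have "\<dots> = (\<integral>\<^sup>+y. \<integral>\<^sup>+x'. \<integral>\<^sup>+c. F (x'(k':=c)) y \<partial>lborel \<partial>lebesgue_n k' \<partial>lebesgue_n l)"
  proof (rule nn_integral_cong)
    fix y assume y: "y \<in> space (lebesgue_n l)"
    have m: "(\<lambda>x. F x y) \<in> borel_measurable (PiM (insert k' {..<k'}) (\<lambda>_. lborel))"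
      using mFc[of "\<lambda>x. x" "PiM (insert k' {..<k'}) (\<lambda>_. lborel)" "\<lambda>_. y"] y kk by simp
    show "(\<integral>\<^sup>+x. F x y \<partial>lebesgue_n k) = (\<integral>\<^sup>+x'. \<integral>\<^sup>+c. F (x'(k':=c)) y \<partial>lborel \<partial>lebesgue_n k')"
      using product_nn_integral_insert[of "{..<k'}" k' "\<lambda>x. F x y"] m kk by simp
  qed
  also have "\<dots> = (\<integral>\<^sup>+y. \<integral>\<^sup>+c. \<integral>\<^sup>+x'. F (x'(k':=c)) y \<partial>lebesgue_n k' \<partial>lborel \<partial>lebesgue_n l)"
  proof (rule nn_integral_cong)
    fix y assume y: "y \<in> space (lebesgue_n l)"
    interpret Q: pair_sigma_finite "lebesgue_n k'" "lborel :: real measure"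
      by (intro pair_sigma_finite.intro sfn lborel.sigma_finite_measure_axioms)
    have m: "(\<lambda>(x', c). F (x'(k':=c)) y) \<in> borel_measurable (lebesgue_n k' \<Otimes>\<^sub>M lborel)"
      using mFc[of "\<lambda>(x', c). x'(k':=c)" "lebesgue_n k' \<Otimes>\<^sub>M lborel" "\<lambda>_. y"] y kk measurable_add_dim[of k' "{..<k'}" "\<lambda>_. lborel"]
      by (simp add: case_prod_beta')
    show "(\<integral>\<^sup>+x'. \<integral>\<^sup>+c. F (x'(k':=c)) y \<partial>lborel \<partial>lebesgue_n k') = (\<integral>\<^sup>+c. \<integral>\<^sup>+x'. F (x'(k':=c)) y \<partial>lebesgue_n k' \<partial>lborel)"
      using Q.Fubini'[of "\<lambda>x' c. F (x'(k':=c)) y"] m by simp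
  qed
  also have "\<dots> = (\<integral>\<^sup>+c. \<integral>\<^sup>+y. \<integral>\<^sup>+x'. F (x'(k':=c)) y \<partial>lebesgue_n k' \<partial>lebesgue_n l \<partial>lborel)"
  proof -
    interpret Q: pair_sigma_finite "lborel :: real measure" "lebesgue_n l"
      by (intro pair_sigma_finite.intro sfn lborel.sigma_finite_measure_axioms)
    interpret R: sigma_finite_measure "lebesgue_n k'" by (rule sfn)
    have m0: "(\<lambda>(q, x'). F (x'(k':=fst q)) (snd q)) \<in> borel_measurable ((lborel \<Otimes>\<^sub>M lebesgue_n l) \<Otimes>\<^sub>M lebesgue_n k')"
    proof -
      have "(\<lambda>p. (snd p)(k' := fst (fst p))) \<in> measurable ((lborel \<Otimes>\<^sub>M lebesgue_n l) \<Otimes>\<^sub>M lebesgue_n k') (lebesgue_n k)"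
        using measurable_compose[OF _ measurable_add_dim[of k' "{..<k'}" "\<lambda>_. lborel"], of "\<lambda>p. (snd p, fst (fst p))"] kk
        by simp
      moreover have "(\<lambda>p. snd (fst p)) \<in> measurable ((lborel \<Otimes>\<^sub>M lebesgue_n l) \<Otimes>\<^sub>M lebesgue_n k') (lebesgue_n l)"
        by simp
      ultimately have "(\<lambda>p. F ((snd p)(k' := fst (fst p))) (snd (fst p))) \<in> borel_measurable ((lborel \<Otimes>\<^sub>M lebesgue_n l) \<Otimes>\<^sub>M lebesgue_n k')"
        by (rule mFc)
      then show ?thesis by (simp add: case_prod_beta')
    qed
    have m: "case_prod (\<lambda>c y. \<integral>\<^sup>+x'. F (x'(k':=c)) y \<partial>lebesgue_n k') \<in> borel_measurable (lborel \<Otimes>\<^sub>M lebesgue_n l)"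
      using R.borel_measurable_nn_integral[OF m0] by (simp add: case_prod_beta')
    show ?thesis using Q.Fubini'[OF m] by simp
  qed
  finally have tot: "emeasure (lebesgue_n k \<Otimes>\<^sub>M lebesgue_n l) W = \<dots>" .
  have inner: "(\<integral>\<^sup>+y. \<integral>\<^sup>+x'. F (x'(k':=c)) y \<partial>lebesgue_n k' \<partial>lebesgue_n l)
     = emeasure (lebesgue_n (k-1+l)) {v \<in> space (lebesgue_n (k-1+l)). hmap k l c v \<in> U}" for c
  proof -
    interpret Q: pair_sigma_finite "lebesgue_n k'" "lebesgue_n l"
      by (intro pair_sigma_finite.intro sfn)
    define J where "J = {k'..<k'+l}"
    have mu: "(\<lambda>p. (fst p)(k':=c)) \<in> measurable (lebesgue_n k' \<Otimes>\<^sub>M lebesgue_n l) (lebesgue_n k)"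
    proof -
      have "(\<lambda>p. (fst p, c)) \<in> measurable (lebesgue_n k' \<Otimes>\<^sub>M lebesgue_n l) (lebesgue_n k' \<Otimes>\<^sub>M (lborel::real measure))"
        by simp
      from measurable_compose[OF this measurable_add_dim[of k' "{..<k'}" "\<lambda>_. lborel"]] kk
      show ?thesis by simp
    qed
    have m: "case_prod (\<lambda>x' y. F (x'(k':=c)) y) \<in> borel_measurable (lebesgue_n k' \<Otimes>\<^sub>M lebesgue_n l)"
      using mFc[OF mu measurable_snd] by (simp add: case_prod_beta')
    have "(\<integral>\<^sup>+y. \<integral>\<^sup>+x'. F (x'(k':=c)) y \<partial>lebesgue_n k' \<partial>lebesgue_n l)
        = (\<integral>\<^sup>+x'. \<integral>\<^sup>+y. F (x'(k':=c)) y \<partial>lebesgue_n l \<partial>lebesgue_n k')"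
      using Q.Fubini'[OF m] .
    also have "\<dots> = (\<integral>\<^sup>+x'. \<integral>\<^sup>+z. indicator U (hmap k l c (merge {..<k'} J (x', z))) \<partial>PiM J (\<lambda>_. lborel) \<partial>lebesgue_n k')"
    proof (rule nn_integral_cong)
      fix x' assume x': "x' \<in> space (lebesgue_n k')"
      have mx: "(\<lambda>_::nat\<Rightarrow>real. x'(k':=c)) \<in> measurable (lebesgue_n l) (lebesgue_n k)"
        using x' kk by (intro measurable_const) (auto simp: space_PiM PiE_iff extensional_def)
      have my: "(\<lambda>y. F (x'(k':=c)) y) \<in> borel_measurable (lebesgue_n l)"
        using mFc[OF mx measurable_ident_sets[OF refl]] by simp
      have ms: "(\<lambda>z. \<lambda>j\<in>{..<l}. z (k'+j)) \<in> measurable (PiM J (\<lambda>_. lborel)) (lebesgue_n l)"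
        unfolding J_def by (rule measurable_PiM_single') (auto simp: PiE_def extensional_def)
      have "(\<integral>\<^sup>+y. F (x'(k':=c)) y \<partial>lebesgue_n l) = (\<integral>\<^sup>+y. F (x'(k':=c)) y \<partial>distr (PiM J (\<lambda>_. lborel)) (lebesgue_n l) (\<lambda>z. \<lambda>j\<in>{..<l}. z (k'+j)))"
        unfolding J_def using shift_distr[of k' l] by simp
      also have "\<dots> = (\<integral>\<^sup>+z. F (x'(k':=c)) (\<lambda>j\<in>{..<l}. z (k'+j)) \<partial>PiM J (\<lambda>_. lborel))"
        using my by (intro nn_integral_distr[OF ms]) simp
      also have "\<dots> = (\<integral>\<^sup>+z. indicator U (hmap k l c (merge {..<k'} J (x', z))) \<partial>PiM J (\<lambda>_. lborel))"
      proof (rule nn_integral_cong)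
        fix z
        have "kron k l (x'(k':=c)) (\<lambda>j\<in>{..<l}. z (k'+j)) = hmap k l c (merge {..<k'} J (x', z))"
          unfolding hmap_def
          by (rule kron_cong) (auto simp: k'_def J_def merge_def)
        then show "F (x'(k':=c)) (\<lambda>j\<in>{..<l}. z (k'+j)) = indicator U (hmap k l c (merge {..<k'} J (x', z)))"
          by (simp add: F_def)
      qed
      finally show "(\<integral>\<^sup>+y. F (x'(k':=c)) y \<partial>lebesgue_n l) = (\<integral>\<^sup>+z. indicator U (hmap k l c (merge {..<k'} J (x', z))) \<partial>PiM J (\<lambda>_. lborel))" .
    qed
    also have "\<dots> = (\<integral>\<^sup>+v. indicator U (hmap k l c v) \<partial>lebesgue_n (k-1+l))"
    proof -
      have IJ: "{..<k'} \<union> J = {..<k-1+l}" by (auto simp: J_def k'_def)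
      have mg: "(\<lambda>v. indicator U (hmap k l c v) :: ennreal) \<in> borel_measurable (PiM ({..<k'} \<union> J) (\<lambda>_. lborel))"
        unfolding IJ using hmap_meas[OF k, of l c] U by measurable
      have d: "{..<k'} \<inter> J = {}" by (auto simp: J_def)
      show ?thesis using product_nn_integral_fold[of "{..<k'}" J, OF d _ _ mg] IJ by (simp add: J_def)
    qed
    also have "\<dots> = emeasure (lebesgue_n (k-1+l)) {v \<in> space (lebesgue_n (k-1+l)). hmap k l c v \<in> U}"
    proof -
      have As: "{v \<in> space (lebesgue_n (k-1+l)). hmap k l c v \<in> U} \<in> sets (lebesgue_n (k-1+l))"
        using hmap_meas[OF k, of l c] U by measurable
      have "(\<integral>\<^sup>+v. indicator U (hmap k l c v) \<partial>lebesgue_n (k-1+l)) = (\<integral>\<^sup>+v. indicator {v \<in> space (lebesgue_n (k-1+l)). hmap k l c v \<in> U} v \<partial>lebesgue_n (k-1+l))"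
        by (rule nn_integral_cong) (auto simp: indicator_def)
      also have "\<dots> = emeasure (lebesgue_n (k-1+l)) {v \<in> space (lebesgue_n (k-1+l)). hmap k l c v \<in> U}" using As by simp
      finally show ?thesis .
    qed
    finally show ?thesis .
  qed
  define g where "g c = emeasure (lebesgue_n (k-1+l)) {v \<in> space (lebesgue_n (k-1+l)). hmap k l c v \<in> U}" for c
  have tot2: "emeasure (lebesgue_n k \<Otimes>\<^sub>M lebesgue_n l) W = (\<integral>\<^sup>+c. g c \<partial>lborel)"
    unfolding tot g_def using inner by simp
  show ?thesis
  proof (rule ccontr)
    assume "\<not> ?thesis"
    then have z: "c \<noteq> 0 \<Longrightarrow> g c = 0" for c unfolding g_def by (auto simp: not_less)
    have "AE c in lborel. g c = 0"
      using AE_lborel_singleton[of "0::real"] by eventually_elim (use z in auto)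
    then have "(\<integral>\<^sup>+c. g c \<partial>lborel) = (\<integral>\<^sup>+c. 0 \<partial>lborel)" using nn_integral_cong_AE[of g "\<lambda>_. 0" lborel] by simp
    then have "emeasure (lebesgue_n k \<Otimes>\<^sub>M lebesgue_n l) W = 0" using tot2 by simp
    then show False using pos unfolding W_def by simp
  qed
qed




lemma has_sum_fin_supp:
  fixes f :: "'a \<Rightarrow> real"
  assumes "finite F" "F \<subseteq> S" "\<And>x. x \<in> S - F \<Longrightarrow> f x = 0" "v = sum f F"
  shows "(f has_sum v) S"
proof -
  have "(f has_sum v) F" using assms(1,4) by simp
  moreover have "(f has_sum v) F \<longleftrightarrow> (f has_sum v) S"
    by (rule has_sum_cong_neutral) (use assms in auto)
  ultimately show ?thesis by simp
qed

definition evec :: "nat \<Rightarrow> nat \<Rightarrow> nat" where "evec p = (\<lambda>i. if i = p then 1 else 0)"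

lemma mono_ev:
  fixes d :: "nat \<Rightarrow> real"
  assumes "p < s"
  shows "(\<Prod>i<s. d i ^ evec p i) = d p"
proof -
  have "(\<Prod>i<s. d i ^ evec p i) = (\<Prod>i<s. if i = p then d i else 1)"
    by (rule prod.cong) (auto simp: evec_def)
  also have "\<dots> = d p" using assms by (simp add: prod.delta)
  finally show ?thesis .
qed

lemma mono_zero:
  fixes d :: "nat \<Rightarrow> real"
  shows "(\<Prod>i<s. d i ^ (\<lambda>_. 0::nat) i) = 1"
  by simp

lemma mono_add:
  fixes d :: "nat \<Rightarrow> real"
  shows "(\<Prod>i<s. d i ^ (\<lambda>i. \<alpha> i + \<beta> i) i) = (\<Prod>i<s. d i ^ \<alpha> i) * (\<Prod>i<s. d i ^ \<beta> i)"
  by (simp add: power_add prod.distrib)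

lemma an1:
  fixes x x0 :: "nat \<Rightarrow> real"
  assumes "p < s"
  shows "((\<lambda>\<alpha>. (if \<alpha> = (\<lambda>_. 0) then a * x0 p else if \<alpha> = evec p then a else 0) * (\<Prod>i<s. (x i - x0 i) ^ \<alpha> i))
     has_sum (a * x p)) {\<alpha>. \<forall>i. i \<ge> s \<longrightarrow> \<alpha> i = 0}"
proof (rule has_sum_fin_supp[of "{(\<lambda>_. 0), evec p}"])
  have ne: "evec p \<noteq> (\<lambda>_. 0)" by (auto simp: evec_def fun_eq_iff)
  show "a * x p = (\<Sum>\<alpha>\<in>{(\<lambda>_. 0), evec p}. (if \<alpha> = (\<lambda>_. 0) then a * x0 p else if \<alpha> = evec p then a else 0) * (\<Prod>i<s. (x i - x0 i) ^ \<alpha> i))"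
    using ne assms by (simp add: mono_ev algebra_simps)
qed (use assms in \<open>auto simp: evec_def\<close>)

lemma an2:
  fixes x x0 :: "nat \<Rightarrow> real"
  assumes "p < s" "q < s" "p \<noteq> q"
  shows "((\<lambda>\<alpha>. (if \<alpha> = (\<lambda>_. 0) then x0 q * x0 p else if \<alpha> = evec q then x0 p else if \<alpha> = evec p then x0 q
             else if \<alpha> = (\<lambda>i. evec q i + evec p i) then 1 else 0) * (\<Prod>i<s. (x i - x0 i) ^ \<alpha> i))
     has_sum (x q * x p)) {\<alpha>. \<forall>i. i \<ge> s \<longrightarrow> \<alpha> i = 0}"
proof (rule has_sum_fin_supp[of "{(\<lambda>_. 0), evec q, evec p, (\<lambda>i. evec q i + evec p i)}"])
  have d: "evec p \<noteq> (\<lambda>_. 0)" "evec q \<noteq> (\<lambda>_. 0)" "evec q \<noteq> evec p" "(\<lambda>i. evec q i + evec p i) \<noteq> (\<lambda>_. 0)"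
     "(\<lambda>i. evec q i + evec p i) \<noteq> evec p" "(\<lambda>i. evec q i + evec p i) \<noteq> evec q"
    using assms by (auto simp: evec_def fun_eq_iff)
  then have d': "evec p \<noteq> evec q" "(\<lambda>_. 0) \<noteq> evec p" "(\<lambda>_. 0) \<noteq> evec q" "(\<lambda>_. 0) \<noteq> (\<lambda>i. evec q i + evec p i)"
     "evec p \<noteq> (\<lambda>i. evec q i + evec p i)" "evec q \<noteq> (\<lambda>i. evec q i + evec p i)" by metis+
  show "x q * x p = (\<Sum>\<alpha>\<in>{(\<lambda>_. 0), evec q, evec p, (\<lambda>i. evec q i + evec p i)}. (if \<alpha> = (\<lambda>_. 0) then x0 q * x0 p else if \<alpha> = evec q then x0 p else if \<alpha> = evec p then x0 q
             else if \<alpha> = (\<lambda>i. evec q i + evec p i) then 1 else 0) * (\<Prod>i<s. (x i - x0 i) ^ \<alpha> i))"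
    using d d' assms by (simp add: mono_add mono_ev algebra_simps)
qed (use assms in \<open>auto simp: evec_def\<close>)




lemma hmap_apply:
  "j < k*l \<Longrightarrow> hmap k l c x j = (if j div l < k-1 then x (j div l) else c) * x (k-1 + j mod l)"
  by (simp add: hmap_def kron_def)

lemma hmap_analytic:
  assumes "k \<ge> 1"
  shows "real_analytic (k-1+l) (k*l) (hmap k l c)"
  unfolding real_analytic_def
proof (intro ballI exI[of _ 1] conjI allI impI)
  fix x0 :: "nat \<Rightarrow> real" and j assume j: "j < k*l"
  define q where "q = j div l"
  define p where "p = k - 1 + j mod l"
  have ml: "j mod l < l"
    using j by (metis mod_less_divisor mult_zero_right not_gr_zero not_less_zero)
  have ps: "p < k-1+l" using ml by (simp add: p_def)
  show "\<exists>cf. \<forall>x\<in>RR (k-1+l). (\<forall>i<k-1+l. \<bar>x i - x0 i\<bar> < 1) \<longrightarrow>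
          ((\<lambda>\<alpha>. cf \<alpha> * (\<Prod>i<k-1+l. (x i - x0 i) ^ \<alpha> i)) has_sum hmap k l c x j) {\<alpha>. \<forall>i. i \<ge> k-1+l \<longrightarrow> \<alpha> i = 0}"
  proof (cases "q < k - 1")
    case True
    have qs: "q < k-1+l" "p \<noteq> q" using True by (auto simp: p_def)
    show ?thesis
      apply (rule exI[of _ "\<lambda>\<alpha>. (if \<alpha> = (\<lambda>_. 0) then x0 q * x0 p else if \<alpha> = evec q then x0 p else if \<alpha> = evec p then x0 q
             else if \<alpha> = (\<lambda>i. evec q i + evec p i) then 1 else 0)"])
      apply (intro ballI impI)
      apply (subst hmap_apply[OF j])
      using an2[OF ps qs(1) qs(2)] True unfolding q_def[symmetric] p_def[symmetric]
      by simp
  next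
    case False
    show ?thesis
      apply (rule exI[of _ "\<lambda>\<alpha>. (if \<alpha> = (\<lambda>_. 0) then c * x0 p else if \<alpha> = evec p then c else 0)"])
      apply (intro ballI impI)
      apply (subst hmap_apply[OF j])
      using an1[OF ps] False unfolding q_def[symmetric] p_def[symmetric]
      by simp
  qed
qed simp




lemma deriv_prod_if:
  assumes "\<not> (A \<and> B)"
  shows "deriv (\<lambda>t::real. (if A then t else a) * (if B then t else b)) x = (if A then b else 0) + (if B then a else 0)"
proof (cases A)
  case True
  then have nB: "\<not> B" using assms by blast
  have "((\<lambda>t::real. t * b) has_field_derivative b) (at x)"
    by (auto intro!: derivative_eq_intros)
  then show ?thesis using True nB by (simp add: DERIV_imp_deriv)
next
  case False
  show ?thesis
  proof (cases B)
    case True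
    have "((\<lambda>t::real. a * t) has_field_derivative a) (at x)"
      by (auto intro!: derivative_eq_intros)
    then show ?thesis using True False by (simp add: DERIV_imp_deriv)
  next
    case F2: False
    have "((\<lambda>t::real. a * b) has_field_derivative 0) (at x)"
      by (auto intro!: derivative_eq_intros)
    then show ?thesis using F2 False by (simp add: DERIV_imp_deriv)
  qed
qed

lemma Dmat_hmap:
  assumes j: "j < k*l" and k: "k \<ge> 1"
  shows "Dmat s (hmap k l c) v j i =
     (if j div l < k-1 \<and> j div l = i then v (k-1 + j mod l) else 0)
     + (if k-1 + j mod l = i then (if j div l < k-1 then v (j div l) else c) else 0)"
proof -
  have "(\<lambda>t. hmap k l c (v(i:=t)) j) = (\<lambda>t. (if j div l < k-1 \<and> j div l = i then t else (if j div l < k-1 then v (j div l) else c))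
       * (if k-1 + j mod l = i then t else v (k-1 + j mod l)))"
    by (intro ext) (auto simp: hmap_apply[OF j])
  moreover have "\<not> ((j div l < k-1 \<and> j div l = i) \<and> k-1 + j mod l = i)" by auto
  ultimately show ?thesis unfolding Dmat_def by (simp add: deriv_prod_if)
qed




definition col :: "nat \<Rightarrow> nat \<Rightarrow> nat \<Rightarrow> nat" where
  "col k l i = (if i < k-1 then i*l else (k-1)*l + (i-(k-1)))"

lemma divmod_eq: "b < (l::nat) \<Longrightarrow> (j = a*l + b) \<longleftrightarrow> (j div l = a \<and> j mod l = b)"
  by (metis add.commute div_mult_self1 div_less less_nat_zero_code mod_mult_self2 mod_less
      div_mult_mod_eq mult.commute add_0_left)

lemma D0:
  assumes j: "j < k*l" and k: "k \<ge> 1" and i: "i < k-1+l"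
  defines "v0 \<equiv> (\<lambda>i. if i < k-1+l then (if i = k-1 then 1 else 0) else undefined)"
  shows "Dmat s (hmap k l c) v0 j i = (if j = col k l i then (if i < k-1 then 1 else c) else 0)"
proof -
  have ml: "j mod l < l"
    using j by (metis mod_less_divisor mult_zero_right not_gr_zero not_less_zero)
  have dl: "j div l < k"
    using j by (simp add: less_mult_imp_div_less mult.commute)
  have l0: "l > 0" using ml by simp
  have e1: "v0 (k-1 + j mod l) = (if j mod l = 0 then 1 else 0)" using ml by (simp add: v0_def)
  have e2: "j div l < k-1 \<Longrightarrow> v0 (j div l) = 0" by (simp add: v0_def)
  show ?thesis
  proof (cases "i < k-1")
    case True
    have "j = col k l i \<longleftrightarrow> j div l = i \<and> j mod l = 0"
      using divmod_eq[OF l0, of j i] True by (simp add: col_def)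
    then show ?thesis using True e1 e2 by (auto simp: Dmat_hmap[OF j k])
  next
    case False
    have il: "i-(k-1) < l" using i False by simp
    have "j = col k l i \<longleftrightarrow> j div l = k-1 \<and> j mod l = i-(k-1)"
      using divmod_eq[OF il, of j "k-1"] False by (simp add: col_def)
    then show ?thesis using False e1 e2 dl by (auto simp: Dmat_hmap[OF j k])
  qed
qed




lemma col_lt: "k \<ge> 1 \<Longrightarrow> l \<ge> 1 \<Longrightarrow> i < k-1+l \<Longrightarrow> col k l i < k*l"
proof (cases "i < k-1")
  case True
  assume "k \<ge> 1" "l \<ge> 1" "i < k-1+l"
  then have "l > 0" by simp
  have "i*l < (k-1)*l + l" using True \<open>l>0\<close>
    by (metis add.commute add_lessD1 mult_less_cancel2 trans_less_add2)
  also have "\<dots> = k*l" using \<open>k\<ge>1\<close> by (metis Suc_diff_le diff_Suc_1 mult_Suc add.commute le_refl order.refl) 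
  finally show ?thesis using True by (simp add: col_def)
next
  case False
  assume "k \<ge> 1" "l \<ge> 1" "i < k-1+l"
  then have "(k-1)*l + (i-(k-1)) < (k-1)*l + l" using False by simp
  also have "\<dots> = k*l" using \<open>k\<ge>1\<close> by (metis Suc_diff_le diff_Suc_1 mult_Suc add.commute le_refl order.refl)
  finally show ?thesis using False by (simp add: col_def)
qed

lemma col_inj:
  assumes "k \<ge> 1" "i < k-1+l" "i' < k-1+l" "col k l i = col k l i'" and l: "l \<ge> 1"
  shows "i = i'"
proof -
  have dm: "col k l i div l = (if i < k-1 then i else k-1) \<and> col k l i mod l = (if i < k-1 then 0 else i-(k-1))"
    if "i < k-1+l" for i
  proof -
    have l0: "l > 0" using l by simp
    show ?thesis
    proof (cases "i < k-1")
      case True then show ?thesis using divmod_eq[OF l0, of "col k l i" i] by (simp add: col_def)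
    next
      case False
      then have "i-(k-1) < l" using that by simp
      then show ?thesis using False divmod_eq[of "i-(k-1)" l "col k l i" "k-1"] by (simp add: col_def)
    qed
  qed
  show ?thesis using dm[OF assms(2)] dm[OF assms(3)] assms(4)
    by (auto split: if_splits)
qed

lemma detn_cong:
  assumes "\<And>i i'. i < n \<Longrightarrow> i' < n \<Longrightarrow> A i i' = B i i'"
  shows "detn n A = detn n B"
  unfolding detn_def
proof (rule sum.cong[OF refl])
  fix p assume "p \<in> {p. p permutes {..<n}}"
  then have "i < n \<Longrightarrow> p i < n" for i using permutes_in_image by fastforce
  then show "of_int (sign p) * (\<Prod>i<n. A i (p i)) = of_int (sign p) * (\<Prod>i<n. B i (p i))"
    using assms by (auto intro!: prod.cong)
qed

lemma detn_diag:
  "detn n (\<lambda>i i'. if i = i' then d i else 0) = (\<Prod>i<n. d i)"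
proof -
  let ?P = "{p. p permutes {..<n}}"
  have fin: "finite ?P" by (simp add: finite_permutations)
  have idP: "id \<in> ?P" by (simp add: permutes_id)
  have z: "of_int (sign p) * (\<Prod>i<n. (if i = p i then d i else 0)) = 0" if "p \<in> ?P - {id}" for p
  proof -
    from that have "p \<noteq> id" "p permutes {..<n}" by auto
    then obtain i where "p i \<noteq> i" by (metis eq_id_iff)
    then have "i < n" using \<open>p permutes {..<n}\<close> by (meson lessThan_iff permutes_def)
    then show ?thesis using \<open>p i \<noteq> i\<close> by (auto intro!: prod_zero bexI[of _ i])
  qed
  have "detn n (\<lambda>i i'. if i = i' then d i else 0) = of_int (sign (id::nat\<Rightarrow>nat)) * (\<Prod>i<n. (if i = id i then d i else 0))
      + (\<Sum>p\<in>?P - {id}. of_int (sign p) * (\<Prod>i<n. (if i = p i then d i else 0)))"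
    unfolding detn_def by (subst sum.remove[OF fin idP]) simp
  also have "\<dots> = (\<Prod>i<n. d i)" using sum.neutral[of "?P - {id}", OF ballI[OF z]] by (simp add: sign_id)
  finally show ?thesis .
qed

lemma Jac_hmap:
  assumes k: "k \<ge> 1" and l: "l \<ge> 1" and c: "c \<noteq> 0"
  defines "v0 \<equiv> (\<lambda>i. if i < k-1+l then (if i = k-1 then 1 else 0) else undefined)"
  shows "Jac (k-1+l) (k*l) (hmap k l c) v0 \<noteq> 0"
proof -
  let ?s = "k-1+l" and ?m = "k*l"
  define w where "w i = (if i < k-1 then 1 else c)" for i
  have sm: "?s \<le> ?m"
    using k l by (cases k; cases l) auto
  have G: "(\<Sum>j<?m. Dmat ?s (hmap k l c) v0 j i * Dmat ?s (hmap k l c) v0 j i') = (if i = i' then w i ^ 2 else 0)"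
    if i: "i < ?s" and i': "i' < ?s" for i i'
  proof -
    have "(\<Sum>j<?m. Dmat ?s (hmap k l c) v0 j i * Dmat ?s (hmap k l c) v0 j i')
        = (\<Sum>j<?m. if j = col k l i then (if i = i' then w i ^ 2 else 0) else 0)"
    proof (rule sum.cong[OF refl])
      fix j assume "j \<in> {..<?m}"
      then have j: "j < ?m" by simp
      show "Dmat ?s (hmap k l c) v0 j i * Dmat ?s (hmap k l c) v0 j i' = (if j = col k l i then (if i = i' then w i ^ 2 else 0) else 0)"
        using D0[OF j k i, of ?s c] D0[OF j k i', of ?s c] col_inj[OF k i i' _ l] unfolding v0_def w_def
        by (auto simp: power2_eq_square)
    qed
    also have "\<dots> = (if i = i' then w i ^ 2 else 0)"
      using col_lt[OF k l i] by (simp add: sum.delta)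
    finally show ?thesis .
  qed
  have "detn ?s (\<lambda>i i'. \<Sum>j<?m. Dmat ?s (hmap k l c) v0 j i * Dmat ?s (hmap k l c) v0 j i')
      = detn ?s (\<lambda>i i'. if i = i' then w i ^ 2 else 0)"
    apply (rule detn_cong) apply (rule G) apply assumption+ done
  also have "\<dots> = (\<Prod>i<?s. w i ^ 2)" by (rule detn_diag)
  finally have dt: "detn ?s (\<lambda>i i'. \<Sum>j<?m. Dmat ?s (hmap k l c) v0 j i * Dmat ?s (hmap k l c) v0 j i') = (\<Prod>i<?s. w i ^ 2)" .
  have "(\<Prod>i<?s. w i ^ 2) > 0" using c by (intro prod_pos) (auto simp: w_def)
  then show ?thesis unfolding Jac_def Let_def using sm dt c by (simp add: w_def)
qed




theorem lemma13:
  fixes M :: "'w measure" and k l :: nat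
    and a b :: "'w \<Rightarrow> (nat \<Rightarrow> real)"
  assumes "prob_space M"
    and "k \<ge> 1" and "l \<ge> 1"
    and "a \<in> measurable M (borel_n k)"
    and "b \<in> measurable M (borel_n l)"
    and "prob_space.indep_var M (borel_n k) a (borel_n l) b"
    and "absolutely_continuous (lebesgue_n k \<Otimes>\<^sub>M lebesgue_n l)
           (distr M (borel_n k) a \<Otimes>\<^sub>M distr M (borel_n l) b)"
  shows "s_analytic (k + l - 1) (k * l)
           (distr M (borel_n (k * l)) (\<lambda>\<omega>. kron k l (a \<omega>) (b \<omega>)))"
proof -
  interpret prob_space M by fact
  note am = assms(4) and bm = assms(5)
  have k: "k \<ge> 1" and l: "l \<ge> 1" by fact+
  have kl: "k + l - 1 = k - 1 + l" using k by simp
  have pm: "(\<lambda>\<omega>. (a \<omega>, b \<omega>)) \<in> measurable M (borel_n k \<Otimes>\<^sub>M borel_n l)"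
    using am bm by (rule measurable_Pair)
  have mK: "(\<lambda>\<omega>. kron k l (a \<omega>) (b \<omega>)) \<in> measurable M (borel_n (k*l))"
    using measurable_compose[OF pm kron_meas] by simp
  have sm: "k - 1 + l \<le> k * l" using k l by (cases k; cases l) auto
  have dist: "distr M (borel_n k) a \<Otimes>\<^sub>M distr M (borel_n l) b = distr M (borel_n k \<Otimes>\<^sub>M borel_n l) (\<lambda>\<omega>. (a \<omega>, b \<omega>))"
    using assms(6) indep_var_distribution_eq by blast
  have sp: "space (lebesgue_n k \<Otimes>\<^sub>M lebesgue_n l) = space (borel_n k \<Otimes>\<^sub>M borel_n l)"
    by (rule sets_eq_imp_space_eq) (rule sets_pair_measure_cong[OF sets_leb sets_leb])
  show ?thesis
    unfolding s_analytic_def kl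
  proof (intro conjI ballI impI)
    show "k - 1 + l \<in> {1..k*l}" using sm l by simp
    fix U assume U: "U \<in> sets (borel_n (k*l))"
      and pos: "0 < emeasure (distr M (borel_n (k * l)) (\<lambda>\<omega>. kron k l (a \<omega>) (b \<omega>))) U"
    define W0 where "W0 = {p \<in> space (borel_n k \<Otimes>\<^sub>M borel_n l). kron k l (fst p) (snd p) \<in> U}"
    have W0s: "W0 \<in> sets (borel_n k \<Otimes>\<^sub>M borel_n l)"
      unfolding W0_def using kron_meas U by measurable
    have "emeasure (distr M (borel_n (k * l)) (\<lambda>\<omega>. kron k l (a \<omega>) (b \<omega>))) U
        = emeasure M ((\<lambda>\<omega>. kron k l (a \<omega>) (b \<omega>)) -` U \<inter> space M)"
      by (rule emeasure_distr[OF mK U])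
    also have "(\<lambda>\<omega>. kron k l (a \<omega>) (b \<omega>)) -` U \<inter> space M = (\<lambda>\<omega>. (a \<omega>, b \<omega>)) -` W0 \<inter> space M"
      using measurable_space[OF pm] by (auto simp: W0_def)
    also have "emeasure M \<dots> = emeasure (distr M (borel_n k \<Otimes>\<^sub>M borel_n l) (\<lambda>\<omega>. (a \<omega>, b \<omega>))) W0"
      by (rule emeasure_distr[OF pm W0s, symmetric])
    finally have "emeasure (distr M (borel_n k) a \<Otimes>\<^sub>M distr M (borel_n l) b) W0 > 0"
      using pos dist by simp
    then have "W0 \<notin> null_sets (distr M (borel_n k) a \<Otimes>\<^sub>M distr M (borel_n l) b)" by auto
    then have nn: "W0 \<notin> null_sets (lebesgue_n k \<Otimes>\<^sub>M lebesgue_n l)"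
      using assms(7) unfolding absolutely_continuous_def by blast
    have W0s': "W0 \<in> sets (lebesgue_n k \<Otimes>\<^sub>M lebesgue_n l)"
      using W0s sets_pair_measure_cong[OF sets_leb sets_leb] by simp
    have "emeasure (lebesgue_n k \<Otimes>\<^sub>M lebesgue_n l)
       {p \<in> space (lebesgue_n k \<Otimes>\<^sub>M lebesgue_n l). kron k l (fst p) (snd p) \<in> U} > 0"
      using nn W0s' unfolding sp W0_def[symmetric] by (auto simp: null_sets_def zero_less_iff_neq_zero)
    from slice[OF k U this] obtain c where c: "c \<noteq> 0"
      and A: "emeasure (lebesgue_n (k-1+l)) {v \<in> space (lebesgue_n (k-1+l)). hmap k l c v \<in> U} > 0"
      by blast
    define A where "A = {v \<in> space (lebesgue_n (k-1+l)). hmap k l c v \<in> U}"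
    have As: "A \<in> sets (borel_n (k-1+l))"
    proof -
      have "A \<in> sets (lebesgue_n (k-1+l))"
        using hmap_meas[OF k, of l c] U unfolding A_def by measurable
      then show ?thesis using sets_leb[of "k-1+l"] by simp
    qed
    define v0 where "v0 = (\<lambda>i. if i < k-1+l then (if i = k-1 then 1 else 0) else (undefined::real))"
    have v0: "v0 \<in> RR (k-1+l)" by (auto simp: v0_def PiE_def extensional_def)
    show "\<exists>A\<in>sets (borel_n (k - 1 + l)). 0 < emeasure (lebesgue_n (k - 1 + l)) A \<and>
          (\<exists>h. real_analytic (k - 1 + l) (k * l) h \<and> (\<exists>v\<in>RR (k - 1 + l). Jac (k - 1 + l) (k * l) h v \<noteq> 0) \<and> h ` A \<subseteq> U)"
    proof (intro bexI[OF _ As] conjI exI[of _ "hmap k l c"] bexI[OF _ v0])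
      show "0 < emeasure (lebesgue_n (k - 1 + l)) A" using A unfolding A_def .
      show "real_analytic (k - 1 + l) (k * l) (hmap k l c)" by (rule hmap_analytic[OF k])
      show "Jac (k - 1 + l) (k * l) (hmap k l c) v0 \<noteq> 0" unfolding v0_def by (rule Jac_hmap[OF k l c])
      show "hmap k l c ` A \<subseteq> U" by (auto simp: A_def)
    qed
  qed
qed


end
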